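(* Let $\beta,\varepsilon\in(0,1)$, let $(V,A,\succ)$ be an election with $n$ voters, and let $(x,y,p)$ be a LEO with total budget $B=1$ and income distribution a threshold distribution $\mathcal{I}^{\beta,\varepsilon}$. Let $C\subseteq A$. Then for every $a\in A\setminus C$, $$\big|\{v\in V: a\succ_v C\}\big|\le \frac{\beta n}{1-\varepsilon}+\big|\{v\in V: v \text{ is uncovered by } C\}\big|.$$
   Context: An election $(V,A,\succ)$: finite nonempty voter set $V$ with $n=|V|$, finite candidate set $A$, strict linear order $\succ_v$ on $A$ per voter; $a\succ_v C$ means $a\succ_v c$ for all $c\in C$. Extend $\succ_v$ to $A\cup\{\emptyset\}$ with $\emptyset$ strictly below all candidates; $a\succeq_v b$ means $a=b$ or $a\succ_v b$. Given prices $p_v\in[0,1]^{A\cup\{\emptyset\}}$ with $p_{v,\emptyset}=0$ and income $b\ge0$, voter $v$'s demand is the $\succ_v$-maximal element of $\{a\in A\cup\{\emptyset\}: p_{v,a}\le b\}$; the random demand $\mathcal{D}_v(p_v,\mathcal{I})$ is this demand with $b\sim\mathcal{I}$. A LEO $(x,y,p)$ with income $\mathcal{I}$ and budget $B>0$: prices $p_v\in[0,1]^{A\cup\{\emptyset\}}$ with $p_{v,\emptyset}=0$, consumptions $x_v\in[0,1]^{A\cup\{\emptyset\}}$, and $y\in[0,B]^A$, with (1) $x_{v,a}=\Pr[\mathcal{D}_v(p_v,\mathcal{I})=a]$; (2) $x_{v,a}\le y_a$ for $a\in A$, and $p_{v,a}=0$ whenever $x_{v,a}<y_a$; (3) $y$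 maximizes $\sum_{a}(\sum_v p_{v,a})z_a$ over $z\in\mathbb{R}^A_{\ge0}$ with $\sum_a z_a=B$. A threshold distribution $\mathcal{I}^{\beta,\varepsilon}$ is a distribution of a random variable $X$ supported on $[0,1]$ with continuous CDF, $\Pr[X\ge1-\varepsilon]=\beta$, and $\mathbb{E}[X]\le\beta$. Given the LEO, the boundary candidate of $v$ is $a_v=$ the $\succ_v$-maximal element of $\{a\in A\cup\{\emptyset\}: p_{v,a}\le1-\varepsilon\}$. Voter $v$ is covered by $C$ if some $c\in C$ satisfies $c\succeq_v a_v$, and uncovered otherwise. *)

theory Defs
  imports "HOL-Probability.Probability"
begin

text \<open>Candidates extended with the empty option: None plays the role of the empty outcome.
  R is a strict preference relation: (a,b) in R means a is strictly preferred to b.\<close>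

definition election :: "'v set \<Rightarrow> 'a set \<Rightarrow> ('v \<Rightarrow> ('a \<times> 'a) set) \<Rightarrow> bool" where
  "election V A pref \<longleftrightarrow> finite V \<and> V \<noteq> {} \<and> finite A \<and>
     (\<forall>v\<in>V. pref v \<subseteq> A \<times> A \<and> strict_linear_order_on A (pref v))"

fun opt_pref :: "('a \<times> 'a) set \<Rightarrow> 'a option \<Rightarrow> 'a option \<Rightarrow> bool" where
  "opt_pref R (Some a) (Some b) = ((a, b) \<in> R)"
| "opt_pref R (Some a) None = True"
| "opt_pref R None _ = False"

definition opt_pref_eq :: "('a \<times> 'a) set \<Rightarrow> 'a option \<Rightarrow> 'a option \<Rightarrow> bool" where
  "opt_pref_eq R o1 o2 \<longleftrightarrow> o1 = o2 \<or> opt_pref R o1 o2"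

definition outcomes :: "'a set \<Rightarrow> 'a option set" where
  "outcomes A = insert None (Some ` A)"

definition demand :: "'a set \<Rightarrow> ('a \<times> 'a) set \<Rightarrow> ('a option \<Rightarrow> real) \<Rightarrow> real \<Rightarrow> 'a option" where
  "demand A R pv b = (THE d. d \<in> outcomes A \<and> pv d \<le> b \<and>
      (\<forall>o'\<in>outcomes A. pv o' \<le> b \<longrightarrow> opt_pref_eq R d o'))"

definition threshold_distribution :: "real measure \<Rightarrow> real \<Rightarrow> real \<Rightarrow> bool" where
  "threshold_distribution I \<beta> \<epsilon> \<longleftrightarrow> real_distribution I \<and>
     measure I {0..1} = 1 \<and> (\<forall>t. isCont (cdf I) t) \<and>
     measure I {1 - \<epsilon>..} = \<beta> \<and> integral\<^sup>L I (\<lambda>t. t) \<le> \<beta>"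

definition LEO :: "'v set \<Rightarrow> 'a set \<Rightarrow> ('v \<Rightarrow> ('a \<times> 'a) set) \<Rightarrow> real measure \<Rightarrow> real \<Rightarrow>
    ('v \<Rightarrow> 'a option \<Rightarrow> real) \<Rightarrow> ('a \<Rightarrow> real) \<Rightarrow> ('v \<Rightarrow> 'a option \<Rightarrow> real) \<Rightarrow> bool" where
  "LEO V A pref I B x y p \<longleftrightarrow> B > 0 \<and>
     (\<forall>v\<in>V. p v None = 0 \<and> (\<forall>w\<in>outcomes A. 0 \<le> p v w \<and> p v w \<le> 1)) \<and>
     (\<forall>v\<in>V. \<forall>w\<in>outcomes A. 0 \<le> x v w \<and> x v w \<le> 1) \<and>
     (\<forall>a\<in>A. 0 \<le> y a \<and> y a \<le> B) \<and>
     (\<forall>v\<in>V. \<forall>w\<in>outcomes A. x v w = measure I {b. demand A (pref v) (p v) b = w}) \<and>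
     (\<forall>v\<in>V. \<forall>a\<in>A. x v (Some a) \<le> y a \<and> (x v (Some a) < y a \<longrightarrow> p v (Some a) = 0)) \<and>
     (\<Sum>a\<in>A. y a) = B \<and>
     (\<forall>z::'a \<Rightarrow> real. (\<forall>a\<in>A. 0 \<le> z a) \<and> (\<Sum>a\<in>A. z a) = B \<longrightarrow>
        (\<Sum>a\<in>A. (\<Sum>v\<in>V. p v (Some a)) * z a) \<le> (\<Sum>a\<in>A. (\<Sum>v\<in>V. p v (Some a)) * y a))"

definition boundary :: "'a set \<Rightarrow> ('v \<Rightarrow> ('a \<times> 'a) set) \<Rightarrow> ('v \<Rightarrow> 'a option \<Rightarrow> real) \<Rightarrow> real \<Rightarrow> 'v \<Rightarrow> 'a option" where
  "boundary A pref p \<epsilon> v = demand A (pref v) (p v) (1 - \<epsilon>)"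

definition covered :: "'a set \<Rightarrow> ('v \<Rightarrow> ('a \<times> 'a) set) \<Rightarrow> ('v \<Rightarrow> 'a option \<Rightarrow> real) \<Rightarrow> real \<Rightarrow> 'a set \<Rightarrow> 'v \<Rightarrow> bool" where
  "covered A pref p \<epsilon> C v \<longleftrightarrow> (\<exists>c\<in>C. opt_pref_eq (pref v) (Some c) (boundary A pref p \<epsilon> v))"

end

theory Submission
  imports Defs
begin

lemma opt_pref_trans:
  assumes "trans R" "opt_pref R x y" "opt_pref R y z"
  shows "opt_pref R x z"
  using assms by (cases x; cases y; cases z) (auto dest: transD)

lemma opt_pref_irrefl:
  assumes "irrefl R" shows "\<not> opt_pref R x x"
  using assms by (cases x) (auto simp: irrefl_def)

lemma opt_pref_total:
  assumes "total_on A R" "x \<in> outcomes A" "y \<in> outcomes A" "x \<noteq> y"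
  shows "opt_pref R x y \<or> opt_pref R y x"
  using assms by (cases x; cases y) (auto simp: outcomes_def total_on_def)

lemma opt_pref_eq_trans:
  assumes "trans R" "opt_pref_eq R x y" "opt_pref_eq R y z"
  shows "opt_pref_eq R x z"
  using assms opt_pref_trans[of R x y z] unfolding opt_pref_eq_def by auto

lemma max_exists:
  assumes "strict_linear_order_on A R" "finite S" "S \<noteq> {}" "S \<subseteq> outcomes A"
  shows "\<exists>d\<in>S. \<forall>q\<in>S. opt_pref_eq R d q"
  using assms(2,3,4)
proof (induction S rule: finite_ne_induct)
  case (singleton x) then show ?case by (auto simp: opt_pref_eq_def)
next
  case (insert x F)
  then obtain d where d: "d \<in> F" "\<forall>q\<in>F. opt_pref_eq R d q" by auto
  have tr: "trans R" and to: "total_on A R" using assms(1) by (auto simp: strict_linear_order_on_def)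
  show ?case
  proof (cases "opt_pref_eq R x d")
    case True
    then show ?thesis using d opt_pref_eq_trans[OF tr True] by (auto simp: opt_pref_eq_def)
  next
    case False
    then have "x \<noteq> d" "\<not> opt_pref R x d" by (auto simp: opt_pref_eq_def)
    then have "opt_pref R d x" using opt_pref_total[OF to, of x d] insert d by auto
    then show ?thesis using d by (auto simp: opt_pref_eq_def)
  qed
qed

lemma demand_spec:
  assumes "strict_linear_order_on A R" "finite A" "pv None = 0" "0 \<le> b"
  shows "demand A R pv b \<in> outcomes A \<and> pv (demand A R pv b) \<le> b \<and>
      (\<forall>o'\<in>outcomes A. pv o' \<le> b \<longrightarrow> opt_pref_eq R (demand A R pv b) o')"
proof -
  let ?S = "{q\<in>outcomes A. pv q \<le> b}"
  have "finite ?S" using assms(2) by (auto simp: outcomes_def)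
  moreover have "None \<in> ?S" using assms by (auto simp: outcomes_def)
  ultimately obtain d where d: "d \<in> ?S" "\<forall>q\<in>?S. opt_pref_eq R d q"
    using max_exists[OF assms(1), of ?S] by blast
  have tr: "trans R" and ir: "irrefl R" using assms(1) by (auto simp: strict_linear_order_on_def)
  have "\<exists>!d. d \<in> outcomes A \<and> pv d \<le> b \<and> (\<forall>o'\<in>outcomes A. pv o' \<le> b \<longrightarrow> opt_pref_eq R d o')"
  proof (rule ex1I[of _ d])
    show "d \<in> outcomes A \<and> pv d \<le> b \<and> (\<forall>o'\<in>outcomes A. pv o' \<le> b \<longrightarrow> opt_pref_eq R d o')"
      using d by auto
  next
    fix e assume e: "e \<in> outcomes A \<and> pv e \<le> b \<and> (\<forall>o'\<in>outcomes A. pv o' \<le> b \<longrightarrow> opt_pref_eq R e o')"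
    then have "opt_pref_eq R e d" "opt_pref_eq R d e" using d by auto
    then show "e = d" using opt_pref_trans[OF tr, of e d e] opt_pref_irrefl[OF ir, of e]
      unfolding opt_pref_eq_def by auto
  qed
  then show ?thesis unfolding demand_def by (rule theI')
qed

lemma spending_bound:
  assumes slo: "strict_linear_order_on A R" and fA: "finite A" and p0: "pv None = 0"
    and pb: "\<forall>w\<in>outcomes A. 0 \<le> pv w \<and> pv w \<le> 1"
    and td: "threshold_distribution I \<beta> \<epsilon>"
  shows "(\<Sum>w\<in>outcomes A. pv w * measure I {t. demand A R pv t = w}) \<le> \<beta>"
proof -
  let ?E = "\<lambda>w. {t. demand A R pv t = w}"
  let ?D = "demand A R pv"
  have rd: "real_distribution I" and m01: "measure I {0..1} = 1"
    and intb: "integral\<^sup>L I (\<lambda>t. t) \<le> \<beta>"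
    using td by (auto simp: threshold_distribution_def)
  interpret real_distribution I by (rule rd)
  have fO: "finite (outcomes A)" using fA by (auto simp: outcomes_def)
  define W where "W = {w\<in>outcomes A. ?E w \<in> sets I}"
  have fW: "finite W" using fO by (auto simp: W_def)
  have intI: "integrable I (indicat_real (?E w))" if "w \<in> W" for w
    using that by (intro integrable_real_indicator) (auto simp: W_def emeasure_eq_measure)
  have "(\<Sum>w\<in>outcomes A. pv w * measure I (?E w)) = (\<Sum>w\<in>W. pv w * measure I (?E w))"
    by (rule sum.mono_neutral_right) (auto simp: W_def fO measure_notin_sets)
  also have "\<dots> = (\<Sum>w\<in>W. integral\<^sup>L I (\<lambda>t. pv w * indicator (?E w) t))"
    by (rule sum.cong) (auto simp: W_def)
  also have "\<dots> = integral\<^sup>L I (\<lambda>t. \<Sum>w\<in>W. pv w * indicator (?E w) t)"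
    by (subst Bochner_Integration.integral_sum) (auto simp: intI)
  also have "\<dots> \<le> integral\<^sup>L I (\<lambda>t. t)"
  proof (rule integral_mono_AE)
    show "integrable I (\<lambda>t. \<Sum>w\<in>W. pv w * indicator (?E w) t)"
      by (auto simp: intI)
    have ae: "AE t in I. t \<in> {0..1}" using AE_prob_1[OF m01] .
    show "integrable I (\<lambda>t. t)"
      by (rule integrable_const_bound[where B=1]) (use ae in \<open>auto elim!: AE_mp\<close>)
    show "AE t in I. (\<Sum>w\<in>W. pv w * indicator (?E w) t) \<le> t"
      using ae
    proof (rule AE_mp, intro AE_I2 impI)
      fix t :: real assume t: "t \<in> {0..1}"
      have ds: "?D t \<in> outcomes A \<and> pv (?D t) \<le> t"
        using demand_spec[of A R pv t, OF slo fA p0] t by auto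
      have "(\<Sum>w\<in>W. pv w * indicator (?E w) t) = (\<Sum>w\<in>W. if w = ?D t then pv w else 0)"
        by (rule sum.cong) (auto simp: indicator_def)
      also have "\<dots> = (if ?D t \<in> W then pv (?D t) else 0)"
        using fW by (simp add: sum.delta')
      also have "\<dots> \<le> t" using ds t by auto
      finally show "(\<Sum>w\<in>W. pv w * indicator (?E w) t) \<le> t" .
    qed
  qed
  also have "\<dots> \<le> \<beta>" by (rule intb)
  finally show ?thesis .
qed


theorem mainTheorem8:
  fixes V :: "'v set" and A :: "'a set" and pref :: "'v \<Rightarrow> ('a \<times> 'a) set"
    and I :: "real measure" and \<beta> \<epsilon> :: real
    and x p :: "'v \<Rightarrow> 'a option \<Rightarrow> real" and y :: "'a \<Rightarrow> real" and C :: "'a set" and a :: 'a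
  assumes "0 < \<beta>" "\<beta> < 1" "0 < \<epsilon>" "\<epsilon> < 1"
    and "election V A pref"
    and "threshold_distribution I \<beta> \<epsilon>"
    and "LEO V A pref I 1 x y p"
    and "C \<subseteq> A"
    and "a \<in> A - C"
  shows "real (card {v\<in>V. \<forall>c\<in>C. (a, c) \<in> pref v})
         \<le> \<beta> * real (card V) / (1 - \<epsilon>) + real (card {v\<in>V. \<not> covered A pref p \<epsilon> C v})"
proof -
  note el = assms(5)[unfolded election_def]
  note leo = assms(7)[unfolded LEO_def]
  have fV: "finite V" and fA: "finite A" and slo: "\<And>v. v \<in> V \<Longrightarrow> strict_linear_order_on A (pref v)"
    using el by auto
  have p0: "\<And>v. v \<in> V \<Longrightarrow> p v None = 0"
    and pb: "\<And>v. v \<in> V \<Longrightarrow> \<forall>w\<in>outcomes A. 0 \<le> p v w \<and> p v w \<le> 1"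
    and xdef: "\<And>v w. v \<in> V \<Longrightarrow> w \<in> outcomes A \<Longrightarrow> x v w = measure I {b. demand A (pref v) (p v) b = w}"
    and xy: "\<And>v b. v \<in> V \<Longrightarrow> b \<in> A \<Longrightarrow> x v (Some b) \<le> y b \<and> (x v (Some b) < y b \<longrightarrow> p v (Some b) = 0)"
    and opt: "\<And>z::'a \<Rightarrow> real. (\<forall>b\<in>A. 0 \<le> z b) \<and> (\<Sum>b\<in>A. z b) = 1 \<Longrightarrow>
        (\<Sum>b\<in>A. (\<Sum>v\<in>V. p v (Some b)) * z b) \<le> (\<Sum>b\<in>A. (\<Sum>v\<in>V. p v (Some b)) * y b)"
    using leo by auto
  define S where "S = {v\<in>V. \<forall>c\<in>C. (a, c) \<in> pref v}"
  define K where "K = {v\<in>S. covered A pref p \<epsilon> C v}"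
  define U where "U = {v\<in>V. \<not> covered A pref p \<epsilon> C v}"
  have "S \<subseteq> K \<union> U" by (auto simp: S_def K_def U_def)
  then have cS: "card S \<le> card K + card U"
    using fV card_mono[of "K \<union> U" S] card_Un_le[of K U]
    by (metis (no_types, lifting) K_def S_def U_def finite_Un le_trans mem_Collect_eq rev_finite_subset subsetI)
  have big: "1 - \<epsilon> < p v (Some a)" if v: "v \<in> K" for v
  proof (rule ccontr)
    assume "\<not> 1 - \<epsilon> < p v (Some a)"
    then have le: "p v (Some a) \<le> 1 - \<epsilon>" by simp
    have vV: "v \<in> V" and aC: "\<forall>c\<in>C. (a, c) \<in> pref v" and cov: "covered A pref p \<epsilon> C v"
      using v by (auto simp: K_def S_def)
    from cov obtain c where c: "c \<in> C" "opt_pref_eq (pref v) (Some c) (boundary A pref p \<epsilon> v)"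
      by (auto simp: covered_def)
    have sl: "strict_linear_order_on A (pref v)" using slo vV .
    have tr: "trans (pref v)" and ir: "irrefl (pref v)" using sl by (auto simp: strict_linear_order_on_def)
    note ds = demand_spec[of A "pref v" "p v" "1 - \<epsilon>", OF sl fA p0[OF vV]]
    have "opt_pref_eq (pref v) (boundary A pref p \<epsilon> v) (Some a)"
      using ds le assms(4,9) by (auto simp: boundary_def outcomes_def)
    then have "opt_pref_eq (pref v) (Some c) (Some a)" using opt_pref_eq_trans[OF tr c(2)] by blast
    then have "c = a \<or> (c, a) \<in> pref v" by (auto simp: opt_pref_eq_def)
    then show False using c(1) assms(9) aC tr ir by (auto simp: irrefl_def dest: transD)
  qed
  have "(1 - \<epsilon>) * card K = (\<Sum>v\<in>K. 1 - \<epsilon>)" by simp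
  also have "\<dots> \<le> (\<Sum>v\<in>K. p v (Some a))"
    using big by (intro sum_mono) (auto intro: less_imp_le)
  also have "\<dots> \<le> (\<Sum>v\<in>V. p v (Some a))"
    using fV pb assms(9) by (intro sum_mono2) (auto simp: K_def S_def outcomes_def)
  also have "\<dots> = (\<Sum>b\<in>A. (\<Sum>v\<in>V. p v (Some b)) * (if b = a then 1 else 0))"
    using fA assms(9) by (simp add: if_distrib cong: if_cong)
  also have "\<dots> \<le> (\<Sum>b\<in>A. (\<Sum>v\<in>V. p v (Some b)) * y b)"
    by (rule opt) (use fA assms(9) in auto)
  also have "\<dots> = (\<Sum>v\<in>V. \<Sum>b\<in>A. p v (Some b) * y b)"
    by (simp add: sum_distrib_right sum.swap[of _ A V])
  also have "\<dots> = (\<Sum>v\<in>V. \<Sum>b\<in>A. p v (Some b) * x v (Some b))"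
  proof (intro sum.cong refl)
    fix v b assume "v \<in> V" "b \<in> A"
    then show "p v (Some b) * y b = p v (Some b) * x v (Some b)"
      using xy[of v b] by (cases "x v (Some b) < y b") auto
  qed
  also have "\<dots> = (\<Sum>v\<in>V. \<Sum>w\<in>outcomes A. p v w * measure I {t. demand A (pref v) (p v) t = w})"
  proof (intro sum.cong refl)
    fix v assume vV: "v \<in> V"
    have "(\<Sum>w\<in>outcomes A. p v w * measure I {t. demand A (pref v) (p v) t = w})
        = (\<Sum>w\<in>outcomes A. p v w * x v w)"
      using vV by (intro sum.cong) (auto simp: xdef)
    also have "\<dots> = p v None * x v None + (\<Sum>w\<in>Some ` A. p v w * x v w)"
      unfolding outcomes_def using fA by (subst sum.insert) auto
    also have "\<dots> = (\<Sum>b\<in>A. p v (Some b) * x v (Some b))"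
      using p0[OF vV] by (simp add: sum.reindex)
    finally show "(\<Sum>b\<in>A. p v (Some b) * x v (Some b)) =
        (\<Sum>w\<in>outcomes A. p v w * measure I {t. demand A (pref v) (p v) t = w})" by simp
  qed
  also have "\<dots> \<le> (\<Sum>v\<in>V. \<beta>)"
    by (intro sum_mono spending_bound[OF slo fA p0 pb assms(6)])
  also have "\<dots> = \<beta> * card V" by simp
  finally have "(1 - \<epsilon>) * card K \<le> \<beta> * card V" .
  then have "real (card K) \<le> \<beta> * card V / (1 - \<epsilon>)"
    using assms(4) by (simp add: field_simps)
  then show ?thesis using cS unfolding S_def[symmetric] U_def[symmetric] by linarith
qed

end
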